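(* Let $\mathcal{H}$ be a finite-dimensional Hilbert space and let $\mathcal{A}$ be a deterministic map sending every unitary $U$ on $\mathcal{H}$ to an operator $\mathcal{A}(U)$ with $\|\mathcal{A}(U)\|_\infty=1$, which is $K$-Lipschitz in the sense that $\|\mathcal{A}(U_1)-\mathcal{A}(U_2)\|_\infty\le K\|U_1-U_2\|_\infty$ for all unitaries $U_1,U_2$. Let $|\psi\rangle,|\varphi\rangle\in\mathcal{H}$ be fixed unit vectors. Then the function $$F(U):=F\big(U|\psi\rangle,\mathcal{A}(U)|\varphi\rangle\big)=\big|\langle\psi|U^\dagger\mathcal{A}(U)|\varphi\rangle\big|^2$$ is $(2+2K)$-Lipschitz in $U$: $|F(U_1)-F(U_2)|\le(2+2K)\|U_1-U_2\|_2$ for all unitaries $U_1,U_2$, where $\|X\|_2=\sqrt{\mathrm{tr}X^\dagger X}$.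
   Context: $\|\cdot\|_\infty$ denotes the operator norm. In this part of the paper, operators output by the map are taken to be exactly norm-preserving, i.e. $\|\mathcal{A}(U)\|_\infty=1$. *)

theory Defs
  imports "HOL-Analysis.Analysis"
begin

text \<open>Finite-dimensional Hilbert space H = complex^'n (standard inner product);
operators on H are complex 'n x 'n matrices.\<close>

definition adjoint_mat :: "complex^'n^'n \<Rightarrow> complex^'n^'n" where
  "adjoint_mat A = (\<chi> i j. cnj (A $ j $ i))"

definition unitary_mat :: "complex^'n^'n \<Rightarrow> bool" where
  "unitary_mat U \<longleftrightarrow> adjoint_mat U ** U = mat 1 \<and> U ** adjoint_mat U = mat 1"

definition op_norm :: "complex^'n^'n \<Rightarrow> real" where
  "op_norm A = onorm (\<lambda>x. A *v x)"

definition trace_mat :: "complex^'n^'n \<Rightarrow> complex" where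
  "trace_mat A = (\<Sum>i\<in>UNIV. A $ i $ i)"

definition hs_norm :: "complex^'n^'n \<Rightarrow> real" where
  "hs_norm X = sqrt (Re (trace_mat (adjoint_mat X ** X)))"

definition braket :: "complex^'n \<Rightarrow> complex^'n \<Rightarrow> complex" where
  "braket x y = (\<Sum>i\<in>UNIV. cnj (x $ i) * y $ i)"

definition pure_fidelity :: "complex^'n \<Rightarrow> complex^'n \<Rightarrow> real" where
  "pure_fidelity x y = (cmod (braket x y))\<^sup>2"

end

theory Submission imports Defs begin

lemma norm_sq: "(norm (x::complex^'n))^2 = (\<Sum>i\<in>UNIV. (cmod (x$i))^2)"
  unfolding norm_vec_def L2_set_def by (simp add: sum_nonneg)

lemma cnj_mult_self: "cnj z * z = complex_of_real ((cmod z)^2)"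
  by (metis complex_norm_square mult.commute)

lemma braket_self: "braket x x = of_real ((norm (x::complex^'n))^2)"
  unfolding norm_sq braket_def of_real_sum
  by (rule sum.cong) (simp_all only: cnj_mult_self)

lemma braket_cs: "cmod (braket x y) \<le> norm (x::complex^'n) * norm y"
proof -
  have "cmod (braket x y) \<le> (\<Sum>i\<in>UNIV. cmod (cnj (x $ i) * y $ i))"
    unfolding braket_def by (rule norm_sum)
  also have "\<dots> = (\<Sum>i\<in>UNIV. \<bar>cmod (x $ i)\<bar> * \<bar>cmod (y $ i)\<bar>)"
    by (simp add: norm_mult)
  also have "\<dots> \<le> L2_set (\<lambda>i. cmod (x $ i)) UNIV * L2_set (\<lambda>i. cmod (y $ i)) UNIV"
    by (rule L2_set_mult_ineq)
  finally show ?thesis by (simp add: norm_vec_def)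
qed

lemma braket_adj: "braket (A *v x) y = braket x (adjoint_mat A *v (y::complex^'n))"
proof -
  have "(\<Sum>i\<in>UNIV. cnj (\<Sum>j\<in>UNIV. A $ i $ j * x $ j) * y $ i)
      = (\<Sum>i\<in>UNIV. \<Sum>j\<in>UNIV. cnj (x $ j) * (cnj (A $ i $ j) * y $ i))"
    by (simp add: sum_distrib_left sum_distrib_right mult_ac)
  also have "\<dots> = (\<Sum>j\<in>UNIV. \<Sum>i\<in>UNIV. cnj (x $ j) * (cnj (A $ i $ j) * y $ i))"
    by (rule sum.swap)
  also have "\<dots> = (\<Sum>j\<in>UNIV. cnj (x $ j) * (\<Sum>i\<in>UNIV. cnj (A $ i $ j) * y $ i))"
    by (simp add: sum_distrib_left)
  finally show ?thesis unfolding braket_def adjoint_mat_def matrix_vector_mult_def by simp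
qed

lemma braket_diff1: "braket (x - y) z = braket x z - braket y z"
  unfolding braket_def by (simp add: sum_subtractf algebra_simps)

lemma braket_diff2: "braket z (x - y) = braket z x - braket z y"
  unfolding braket_def by (simp add: sum_subtractf algebra_simps)

lemma unitary_norm: assumes "unitary_mat U" shows "norm (U *v x) = norm (x::complex^'n)"
proof -
  have "braket (U *v x) (U *v x) = braket x x"
    using assms unfolding unitary_mat_def
    by (simp add: braket_adj matrix_vector_mul_assoc)
  hence "complex_of_real ((norm (U *v x))^2) = complex_of_real ((norm x)^2)"
    by (simp only: braket_self)
  hence "(norm (U *v x))^2 = (norm x)^2" by (simp only: of_real_eq_iff)
  thus ?thesis by (simp add: power2_eq_iff_nonneg)
qed

lemma op_norm_bound: "norm (A *v x) \<le> op_norm A * norm (x::complex^'n)"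
  unfolding op_norm_def by (rule onorm) simp

lemma op_norm_nonneg: "0 \<le> op_norm (A::complex^'n^'n)"
  unfolding op_norm_def by (rule onorm_pos_le) simp

lemma Re_cnj_mult: "Re (cnj z * z) = (cmod z)^2"
  using cmod_power2[of z] by (simp add: power2_eq_square)

lemma hs_sq: "(hs_norm A)^2 = (\<Sum>i\<in>UNIV. \<Sum>j\<in>UNIV. (cmod (A$i$j))^2)"
proof -
  have "Re (trace_mat (adjoint_mat A ** A)) = (\<Sum>j\<in>UNIV. \<Sum>i\<in>UNIV. Re (cnj (A$i$j) * A$i$j))"
    unfolding trace_mat_def adjoint_mat_def matrix_matrix_mult_def
    by (simp add: Re_sum)
  also have "\<dots> = (\<Sum>j\<in>UNIV. \<Sum>i\<in>UNIV. (cmod (A$i$j))^2)"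
    by (simp only: Re_cnj_mult)
  also have "\<dots> = (\<Sum>i\<in>UNIV. \<Sum>j\<in>UNIV. (cmod (A$i$j))^2)" by (rule sum.swap)
  finally have eq: "Re (trace_mat (adjoint_mat A ** A)) = (\<Sum>i\<in>UNIV. \<Sum>j\<in>UNIV. (cmod (A$i$j))^2)" .
  have "0 \<le> (\<Sum>i\<in>UNIV. \<Sum>j\<in>UNIV. (cmod (A$i$j))^2)" by (simp add: sum_nonneg)
  thus ?thesis unfolding hs_norm_def eq by simp
qed

lemma hs_nonneg: "0 \<le> hs_norm A" unfolding hs_norm_def
proof (rule real_sqrt_ge_zero)
  have "0 \<le> (hs_norm A)^2" by simp
  thus "0 \<le> Re (trace_mat (adjoint_mat A ** A))"
    unfolding hs_sq unfolding trace_mat_def adjoint_mat_def matrix_matrix_mult_def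
    by (simp add: Re_sum sum_nonneg)
qed

lemma row_bound: "(cmod (\<Sum>j\<in>UNIV. A$i$j * x$j))^2 \<le> (\<Sum>j\<in>UNIV. (cmod (A$i$j))^2) * (norm (x::complex^'n))^2"
proof -
  have "cmod (\<Sum>j\<in>UNIV. A$i$j * x$j) \<le> (\<Sum>j\<in>UNIV. \<bar>cmod (A$i$j)\<bar> * \<bar>cmod (x$j)\<bar>)"
    by (rule order_trans[OF norm_sum]) (simp add: norm_mult)
  also have "\<dots> \<le> L2_set (\<lambda>j. cmod (A$i$j)) UNIV * L2_set (\<lambda>j. cmod (x $ j)) UNIV"
    by (rule L2_set_mult_ineq)
  finally have "(cmod (\<Sum>j\<in>UNIV. A$i$j * x$j))^2 \<le> (L2_set (\<lambda>j. cmod (A$i$j)) UNIV * L2_set (\<lambda>j. cmod (x $ j)) UNIV)^2"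
    by (rule power_mono) simp
  thus ?thesis by (simp add: power_mult_distrib L2_set_def sum_nonneg norm_vec_def)
qed

lemma op_le_hs: "op_norm (A::complex^'n^'n) \<le> hs_norm A"
  unfolding op_norm_def
proof (rule onorm_bound[OF hs_nonneg])
  fix x :: "complex^'n"
  have "(norm (A *v x))^2 = (\<Sum>i\<in>UNIV. (cmod (\<Sum>j\<in>UNIV. A$i$j * x$j))^2)"
    by (simp add: norm_sq matrix_vector_mult_def)
  also have "\<dots> \<le> (\<Sum>i\<in>UNIV. (\<Sum>j\<in>UNIV. (cmod (A$i$j))^2) * (norm x)^2)"
    by (rule sum_mono) (rule row_bound)
  also have "\<dots> = (hs_norm A * norm x)^2"
    by (simp add: hs_sq power_mult_distrib sum_distrib_right)
  finally show "norm (A *v x) \<le> hs_norm A * norm x"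
    using hs_nonneg by (meson mult_nonneg_nonneg norm_ge_zero power2_le_imp_le)
qed

theorem lemma2:
  fixes \<A> :: "complex^'n^'n \<Rightarrow> complex^'n^'n"
    and K :: real
    and \<psi> \<phi> :: "complex^'n"
  assumes norm_one: "\<And>U. unitary_mat U \<Longrightarrow> op_norm (\<A> U) = 1"
    and lipschitz: "\<And>U1 U2. unitary_mat U1 \<Longrightarrow> unitary_mat U2 \<Longrightarrow>
        op_norm (\<A> U1 - \<A> U2) \<le> K * op_norm (U1 - U2)"
    and psi_unit: "norm \<psi> = 1"
    and phi_unit: "norm \<phi> = 1"
    and U1: "unitary_mat U1" and U2: "unitary_mat U2"
  shows "\<bar>pure_fidelity (U1 *v \<psi>) (\<A> U1 *v \<phi>) - pure_fidelity (U2 *v \<psi>) (\<A> U2 *v \<phi>)\<bar>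
           \<le> (2 + 2 * K) * hs_norm (U1 - U2)"
proof -
  define a1 where "a1 = braket (U1 *v \<psi>) (\<A> U1 *v \<phi>)"
  define a2 where "a2 = braket (U2 *v \<psi>) (\<A> U2 *v \<phi>)"
  define d where "d = op_norm (U1 - U2)"
  have Aphi: "norm (\<A> U *v \<phi>) \<le> 1" if "unitary_mat U" for U
    using op_norm_bound[of "\<A> U" \<phi>] norm_one[OF that] phi_unit by simp
  have a1b: "cmod a1 \<le> 1" unfolding a1_def
    using braket_cs[of "U1 *v \<psi>" "\<A> U1 *v \<phi>"] unitary_norm[OF U1] psi_unit Aphi[OF U1] by simp
  have a2b: "cmod a2 \<le> 1" unfolding a2_def
    using braket_cs[of "U2 *v \<psi>" "\<A> U2 *v \<phi>"] unitary_norm[OF U2] psi_unit Aphi[OF U2] by simp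
  have split: "a1 - a2 = braket ((U1 - U2) *v \<psi>) (\<A> U1 *v \<phi>) + braket (U2 *v \<psi>) ((\<A> U1 - \<A> U2) *v \<phi>)"
    unfolding a1_def a2_def
    by (simp add: matrix_vector_mult_diff_rdistrib braket_diff1 braket_diff2)
  have t1: "cmod (braket ((U1 - U2) *v \<psi>) (\<A> U1 *v \<phi>)) \<le> d"
  proof -
    have "cmod (braket ((U1 - U2) *v \<psi>) (\<A> U1 *v \<phi>)) \<le> norm ((U1 - U2) *v \<psi>) * norm (\<A> U1 *v \<phi>)"
      by (rule braket_cs)
    also have "\<dots> \<le> d * 1"
      using op_norm_bound[of "U1 - U2" \<psi>] psi_unit Aphi[OF U1] op_norm_nonneg[of "U1 - U2"]
      unfolding d_def by (intro mult_mono) auto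
    finally show ?thesis by simp
  qed
  have t2: "cmod (braket (U2 *v \<psi>) ((\<A> U1 - \<A> U2) *v \<phi>)) \<le> K * d"
  proof -
    have "cmod (braket (U2 *v \<psi>) ((\<A> U1 - \<A> U2) *v \<phi>)) \<le> norm (U2 *v \<psi>) * norm ((\<A> U1 - \<A> U2) *v \<phi>)"
      by (rule braket_cs)
    also have "\<dots> \<le> op_norm (\<A> U1 - \<A> U2)"
      using op_norm_bound[of "\<A> U1 - \<A> U2" \<phi>] phi_unit unitary_norm[OF U2] psi_unit by simp
    also have "\<dots> \<le> K * d" unfolding d_def by (rule lipschitz[OF U1 U2])
    finally show ?thesis .
  qed
  have diff: "cmod (a1 - a2) \<le> (1 + K) * d"
    using split t1 t2 norm_triangle_ineq[of "braket ((U1 - U2) *v \<psi>) (\<A> U1 *v \<phi>)" "braket (U2 *v \<psi>) ((\<A> U1 - \<A> U2) *v \<phi>)"]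
    by (simp add: algebra_simps)
  have lhs: "\<bar>(cmod a1)^2 - (cmod a2)^2\<bar> \<le> 2 * cmod (a1 - a2)"
  proof -
    have "(cmod a1)^2 - (cmod a2)^2 = (cmod a1 - cmod a2) * (cmod a1 + cmod a2)"
      by (simp add: power2_eq_square algebra_simps)
    hence "\<bar>(cmod a1)^2 - (cmod a2)^2\<bar> = \<bar>cmod a1 - cmod a2\<bar> * (cmod a1 + cmod a2)"
      by (simp add: abs_mult)
    also have "\<dots> \<le> cmod (a1 - a2) * 2"
      using a1b a2b norm_triangle_ineq3[of a1 a2]
      by (intro mult_mono) auto
    finally show ?thesis by simp
  qed
  have dnn: "0 \<le> d" unfolding d_def by (rule op_norm_nonneg)
  have dhs: "d \<le> hs_norm (U1 - U2)" unfolding d_def by (rule op_le_hs)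
  have main: "\<bar>(cmod a1)^2 - (cmod a2)^2\<bar> \<le> (2 + 2 * K) * d"
    using lhs diff by (simp add: algebra_simps)
  show ?thesis
  proof (cases "K \<ge> -1")
    case True
    have "(2 + 2 * K) * d \<le> (2 + 2 * K) * hs_norm (U1 - U2)"
      using True dhs by (intro mult_left_mono) auto
    with main show ?thesis unfolding pure_fidelity_def a1_def a2_def by simp
  next
    case False
    have "0 \<le> op_norm (\<A> U1 - \<A> U2)" by (rule op_norm_nonneg)
    with lipschitz[OF U1 U2] have "0 \<le> K * d" unfolding d_def by linarith
    with False dnn have "d = 0" by (auto simp: zero_le_mult_iff)
    have "U1 - U2 = 0"
    proof (subst matrix_eq, intro allI)
      fix x :: "complex^'n"
      have "norm ((U1 - U2) *v x) \<le> 0" using op_norm_bound[of "U1 - U2" x] \<open>d = 0\<close> unfolding d_def by simp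
      thus "(U1 - U2) *v x = 0 *v x" by simp
    qed
    hence "U1 = U2" by simp
    thus ?thesis by (simp add: hs_norm_def trace_mat_def adjoint_mat_def matrix_matrix_mult_def)
  qed
qed

end
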